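(* Let $J=V+\sqrt{-1}S$ be a complex positive semidefinite matrix with $V=\mathrm{Re}\,J$ strictly positive. Then $J\#J^\top=V^{1/2}\{I+(V^{-1/2}SV^{-1/2})^2\}^{1/2}V^{1/2}$.
   Context: $P\#Q$ is the operator geometric mean: $P^{1/2}(P^{-1/2}QP^{-1/2})^{1/2}P^{1/2}$ for positive definite $P,Q$ and $\lim_{\epsilon\downarrow0}(P+\epsilon I)\#(Q+\epsilon I)$ for positive semidefinite $P,Q$. *)

theory Defs
  imports "HOL-Analysis.Analysis"
begin

definition cadj :: "complex^'n^'n \<Rightarrow> complex^'n^'n" where
  "cadj A = (\<chi> i j. cnj (A $ j $ i))"

definition cquad :: "complex^'n^'n \<Rightarrow> complex^'n \<Rightarrow> complex" where
  "cquad A x = (\<Sum>i\<in>UNIV. cnj (x $ i) * ((A *v x) $ i))"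

definition psd :: "complex^'n^'n \<Rightarrow> bool" where
  "psd A \<longleftrightarrow> cadj A = A \<and> (\<forall>x. 0 \<le> Re (cquad A x))"

definition pd :: "complex^'n^'n \<Rightarrow> bool" where
  "pd A \<longleftrightarrow> cadj A = A \<and> (\<forall>x. x \<noteq> 0 \<longrightarrow> 0 < Re (cquad A x))"

definition msqrt :: "complex^'n^'n \<Rightarrow> complex^'n^'n" where
  "msqrt A = (THE B. psd B \<and> B ** B = A)"

definition gmean_pd :: "complex^'n^'n \<Rightarrow> complex^'n^'n \<Rightarrow> complex^'n^'n" where
  "gmean_pd P Q =
     (let R = msqrt P; Ri = matrix_inv R in R ** msqrt (Ri ** Q ** Ri) ** R)"

definition gmean :: "complex^'n^'n \<Rightarrow> complex^'n^'n \<Rightarrow> complex^'n^'n" where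
  "gmean P Q = (if pd P \<and> pd Q then gmean_pd P Q
     else Lim (at_right (0::real))
            (\<lambda>e. gmean_pd (P + mat (complex_of_real e)) (Q + mat (complex_of_real e))))"

definition mRe :: "complex^'n^'n \<Rightarrow> complex^'n^'n" where
  "mRe A = (\<chi> i j. complex_of_real (Re (A $ i $ j)))"

definition mIm :: "complex^'n^'n \<Rightarrow> complex^'n^'n" where
  "mIm A = (\<chi> i j. complex_of_real (Im (A $ i $ j)))"

end

theory Submission
  imports Defs
begin


lemma cadj_nth[simp]: "cadj A $ i $ j = cnj (A $ j $ i)" by (simp add: cadj_def)
lemma cadj_cadj[simp]: "cadj (cadj A) = A" by (simp add: vec_eq_iff)
lemma cadj_mult: "cadj (A ** B) = cadj B ** cadj A"
  by (simp add: vec_eq_iff matrix_matrix_mult_def mult.commute)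
lemma cadj_add: "cadj (A + B) = cadj A + cadj B" by (simp add: vec_eq_iff)
lemma cadj_diff: "cadj (A - B) = cadj A - cadj B" by (simp add: vec_eq_iff)
lemma cadj_uminus: "cadj (- A) = - cadj A" by (simp add: vec_eq_iff)
lemma cadj_mat[simp]: "cadj (mat c) = mat (cnj c)" by (simp add: vec_eq_iff mat_def)

definition cinner :: "complex^'n \<Rightarrow> complex^'n \<Rightarrow> complex" where
  "cinner x y = (\<Sum>i\<in>UNIV. cnj (x$i) * y$i)"

lemma cquad_cinner: "cquad A x = cinner x (A *v x)" by (simp add: cquad_def cinner_def)

lemma cinner_add_left: "cinner (x + y) z = cinner x z + cinner y z"
  by (simp add: cinner_def distrib_right sum.distrib)
lemma cinner_add_right: "cinner z (x + y) = cinner z x + cinner z y"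
  by (simp add: cinner_def distrib_left sum.distrib)
lemma cinner_diff_left: "cinner (x - y) z = cinner x z - cinner y z"
  by (simp add: cinner_def left_diff_distrib sum_subtractf)
lemma cinner_diff_right: "cinner z (x - y) = cinner z x - cinner z y"
  by (simp add: cinner_def right_diff_distrib sum_subtractf)
lemma cinner_smult_left: "cinner (c *s x) z = cnj c * cinner x z"
  by (simp add: cinner_def sum_distrib_left mult.assoc)
lemma cinner_smult_right: "cinner z (c *s x) = c * cinner z x"
  by (simp add: cinner_def sum_distrib_left mult.left_commute)
lemma cinner_zero_left[simp]: "cinner 0 x = 0" by (simp add: cinner_def)
lemma cinner_zero_right[simp]: "cinner x 0 = 0" by (simp add: cinner_def)
lemma cnj_cinner: "cnj (cinner x y) = cinner y x"
  by (simp add: cinner_def mult.commute)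

lemma cinner_adj: "cinner x (A *v y) = cinner (cadj A *v x) y"
proof -
  have "cinner x (A *v y) = (\<Sum>i\<in>UNIV. \<Sum>j\<in>UNIV. cnj (x$i) * A$i$j * y$j)"
    by (simp add: cinner_def matrix_vector_mult_def sum_distrib_left mult.assoc)
  also have "\<dots> = (\<Sum>j\<in>UNIV. \<Sum>i\<in>UNIV. cnj (x$i) * A$i$j * y$j)"
    by (rule sum.swap)
  also have "\<dots> = (\<Sum>j\<in>UNIV. (\<Sum>i\<in>UNIV. cnj (x$i) * A$i$j) * y$j)"
    by (simp add: sum_distrib_right)
  also have "\<dots> = cinner (cadj A *v x) y"
    by (simp add: cinner_def matrix_vector_mult_def mult.commute)
  finally show ?thesis .
qed

lemma cinner_self: "cinner x x = complex_of_real (\<Sum>i\<in>UNIV. (cmod (x$i))^2)"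
  unfolding cinner_def of_real_sum
  by (rule sum.cong) (simp_all add: complex_norm_square mult.commute del: of_real_power)

lemma cinner_self_Re: "Re (cinner x x) = (\<Sum>i\<in>UNIV. (cmod (x$i))^2)"
  by (simp add: cinner_self)

lemma cinner_self_nonneg: "0 \<le> Re (cinner x x)"
  by (simp add: cinner_self_Re sum_nonneg)

lemma cinner_self_eq0: "Re (cinner x x) = 0 \<longleftrightarrow> x = 0"
proof
  assume "Re (cinner x x) = 0"
  then have "\<forall>i\<in>UNIV. (cmod (x$i))^2 = 0"
    by (subst sum_nonneg_eq_0_iff[symmetric]) (auto simp: cinner_self_Re)
  then show "x = 0" by (simp add: vec_eq_iff)
qed simp

lemma cinner_self_pos: "x \<noteq> 0 \<Longrightarrow> 0 < Re (cinner x x)"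
  using cinner_self_nonneg[of x] cinner_self_eq0[of x] by linarith

lemma cquad_congr: "cquad (cadj T ** A ** T) x = cquad A (T *v x)"
  by (simp add: cquad_cinner cinner_adj matrix_vector_mul_assoc[symmetric])

lemma herm_cinner: "cadj A = A \<Longrightarrow> cinner x (A *v y) = cinner (A *v x) y"
  by (metis cinner_adj)

lemma herm_cquad_real: "cadj A = A \<Longrightarrow> cnj (cquad A x) = cquad A x"
  by (metis cquad_cinner cnj_cinner herm_cinner)

lemma herm_cquad_Im: "cadj A = A \<Longrightarrow> Im (cquad A x) = 0"
  by (metis herm_cquad_real Reals_cnj_iff complex_is_Real_iff)

lemma quad_ineq:
  fixes a b :: real
  assumes "\<And>t. 0 \<le> a*t^2 + b*t" "0 \<le> a"
  shows "b = 0"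
proof -
  define t where "t = -b/(a+1)"
  have b: "b = -(a+1)*t" using assms(2) by (simp add: t_def field_simps)
  have "0 \<le> a*t^2 + b*t" by (rule assms(1))
  also have "a*t^2 + b*t = -(t^2)" by (simp add: b algebra_simps power2_eq_square)
  finally have "t = 0" by simp
  then show ?thesis by (simp add: b)
qed


lemma mvec_smult: "A *v (c *s x) = c *s (A *v (x::complex^'n))"
  by (simp add: vec_eq_iff matrix_vector_mult_def sum_distrib_left mult_ac)

lemma mvec_scaleR: "A *v (c *\<^sub>R x) = c *\<^sub>R (A *v (x::complex^'n))"
  by (simp add: vec_eq_iff matrix_vector_mult_def scaleR_sum_right)

lemma cquad_expand:
  assumes "cadj A = A"
  shows "Re (cquad A (x + t *\<^sub>R y)) = Re (cquad A x) + t^2 * Re (cquad A y) + 2 * t * Re (cinner y (A *v x))"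
proof -
  have sc: "t *\<^sub>R y = complex_of_real t *s y" by (simp add: vec_eq_iff scaleR_conv_of_real[where 'a=complex])
  have c1: "cinner x (A *v y) = cnj (cinner y (A *v x))"
    using herm_cinner[OF assms] cnj_cinner by metis
  have "cquad A (x + t *\<^sub>R y) = cquad A x + complex_of_real t * cinner x (A *v y)
      + complex_of_real t * cinner y (A *v x) + complex_of_real t * complex_of_real t * cquad A y"
    unfolding sc cquad_cinner
    by (simp add: matrix_vector_right_distrib mvec_smult cinner_add_left cinner_add_right
        cinner_smult_left cinner_smult_right algebra_simps)
  then show ?thesis by (simp add: c1 power2_eq_square)
qed

lemma quad_zero:
  assumes herm: "cadj A = A"
    and Padd: "\<And>u v. P u \<Longrightarrow> P v \<Longrightarrow> P (u + v)"
    and Psc: "\<And>c u. P u \<Longrightarrow> P (c *s u)"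
    and nn: "\<And>z. P z \<Longrightarrow> 0 \<le> Re (cquad A z)"
    and Px: "P x" and x0: "Re (cquad A x) = 0" and Py: "P y"
  shows "cinner y (A *v x) = 0"
proof -
  have re: "Re (cinner w (A *v x)) = 0" if Pw: "P w" for w
  proof -
    have "2 * Re (cinner w (A *v x)) = 0"
    proof (rule quad_ineq[where a = "Re (cquad A w)"])
      fix t :: real
      have sc: "t *\<^sub>R w = complex_of_real t *s w" by (simp add: vec_eq_iff scaleR_conv_of_real[where 'a=complex])
      have "0 \<le> Re (cquad A (x + t *\<^sub>R w))"
        unfolding sc by (intro nn Padd Px Psc Pw)
      then show "0 \<le> Re (cquad A w) * t^2 + 2 * Re (cinner w (A *v x)) * t"
        using cquad_expand[OF herm, of x t w] x0 by (simp add: algebra_simps)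
    qed (rule nn[OF Pw])
    then show ?thesis by simp
  qed
  have "Re (cinner (\<i> *s y) (A *v x)) = 0" by (intro re Psc Py)
  then have "Im (cinner y (A *v x)) = 0" by (simp add: cinner_smult_left)
  with re[OF Py] show ?thesis by (simp add: complex_eq_iff)
qed

lemma psd_zero:
  assumes "psd A" "Re (cquad A x) = 0"
  shows "A *v x = 0"
proof -
  have "cinner (A *v x) (A *v x) = 0"
    by (rule quad_zero[where P="\<lambda>_. True"]) (use assms in \<open>auto simp: psd_def\<close>)
  then show ?thesis using cinner_self_eq0 by (metis zero_complex.simps(1))
qed

lemma minv:
  assumes "invertible A"
  shows "A ** matrix_inv A = mat 1" "matrix_inv A ** A = mat 1"
  using someI_ex[OF assms[unfolded invertible_def]] by (auto simp: matrix_inv_def)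

lemma minv_unique:
  fixes A :: "'a::field^'n^'n"
  assumes "A ** B = mat 1"
  shows "matrix_inv A = B"
proof -
  have BA: "B ** A = mat 1" using assms matrix_left_right_inverse by blast
  then have inv: "invertible A" using assms invertible_def by blast
  have "matrix_inv A = matrix_inv A ** (A ** B)" by (simp add: assms)
  also have "\<dots> = B" by (simp add: matrix_mul_assoc minv(2)[OF inv])
  finally show ?thesis .
qed

lemma invertibleI: "(A::'a::field^'n^'n) ** B = mat 1 \<Longrightarrow> invertible A"
  using invertible_right_inverse by blast

definition unitary :: "complex^'n^'n \<Rightarrow> bool" where
  "unitary U \<longleftrightarrow> cadj U ** U = mat 1"

lemma unitary_right: "unitary U \<Longrightarrow> U ** cadj U = mat 1"
  unfolding unitary_def using matrix_left_right_inverse by blast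

lemma unitary_mult: "unitary U \<Longrightarrow> unitary W \<Longrightarrow> unitary (U ** W)"
  unfolding unitary_def cadj_mult
  by (metis matrix_mul_assoc matrix_mul_lid)

lemma mat_entry_axis: "M $ a $ b = (M *v axis b 1) $ a"
  by (simp add: matrix_vector_mult_def axis_def if_distrib cong: if_cong)


lemma norm_cinner: "norm (z::complex^'n) = sqrt (Re (cinner z z))"
  by (simp add: norm_vec_def L2_set_def cinner_self_Re)

lemma norm_sq_cinner: "(norm (z::complex^'n))^2 = Re (cinner z z)"
  by (simp add: norm_cinner cinner_self_nonneg)

lemma cinner_axis_left: "cinner (axis i c) z = cnj c * z$i"
proof -
  have "cinner (axis i c) z = (\<Sum>j\<in>UNIV. if j = i then cnj c * z$j else 0)"
    unfolding cinner_def by (rule sum.cong) (auto simp: axis_def)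
  then show ?thesis by simp
qed

lemma cinner_axis_right: "cinner z (axis i c) = cnj (z$i) * c"
proof -
  have "cinner z (axis i c) = (\<Sum>j\<in>UNIV. if j = i then cnj (z$j) * c else 0)"
    unfolding cinner_def by (rule sum.cong) (auto simp: axis_def)
  then show ?thesis by simp
qed

lemma cquad_scaleR: "cquad D (r *\<^sub>R z) = complex_of_real (r^2) * cquad D z"
proof -
  have sc: "r *\<^sub>R z = complex_of_real r *s z" by (simp add: vec_eq_iff scaleR_conv_of_real[where 'a=complex])
  show ?thesis unfolding sc cquad_cinner
    by (simp add: mvec_smult cinner_smult_left cinner_smult_right power2_eq_square)
qed

definition hh :: "complex^'n \<Rightarrow> complex^'n^'n" where
  "hh w = (\<chi> a b. (if a = b then 1 else 0) - (2 / cinner w w) * w$a * cnj (w$b))"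

lemma hh_apply: "hh w *v z = z - ((2 / cinner w w) * cinner w z) *s w"
proof -
  have "(hh w *v z) $ a = z $ a - ((2 / cinner w w) * cinner w z) * w $ a" for a
  proof -
    have "(hh w *v z) $ a = (\<Sum>b\<in>UNIV. (if a = b then z$b else 0) - (2 / cinner w w) * w$a * (cnj (w$b) * z$b))"
      unfolding matrix_vector_mult_def vec_lambda_beta
      by (rule sum.cong) (auto simp: hh_def left_diff_distrib mult.assoc)
    also have "\<dots> = z $ a - (2 / cinner w w) * w$a * cinner w z"
      by (simp add: sum_subtractf sum_distrib_left cinner_def)
    finally show ?thesis by (simp add: mult_ac)
  qed
  then show ?thesis by (simp add: vec_eq_iff)
qed

lemma cinner_real_self: "cnj (cinner w w) = cinner w w"
  by (simp add: cnj_cinner)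

lemma hh_props:
  assumes w: "w \<noteq> 0"
  shows "hh w ** hh w = mat 1" "cadj (hh w) = hh w"
proof -
  define q where "q = cinner w w"
  have q0: "q \<noteq> 0" using cinner_self_eq0[of w] w by (auto simp: q_def)
  show "hh w ** hh w = mat 1"
  proof (subst matrix_eq, intro allI)
    fix z
    define c where "c = cinner w z"
    have "cinner w (z - ((2 / q) * c) *s w) = c - (2/q) * c * q"
      by (simp add: cinner_diff_right cinner_smult_right c_def q_def)
    also have "\<dots> = - c" using q0 by (simp add: field_simps)
    finally have e: "cinner w (z - ((2 / q) * c) *s w) = - c" .
    have "(hh w ** hh w) *v z = hh w *v (hh w *v z)" by (simp add: matrix_vector_mul_assoc)
    also have "\<dots> = z" unfolding hh_apply q_def[symmetric] c_def[symmetric] e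
      by (simp add: vec_eq_iff algebra_simps)
    finally show "(hh w ** hh w) *v z = mat 1 *v z" by simp
  qed
  have cq: "cnj q = q" by (simp add: q_def cinner_real_self)
  show "cadj (hh w) = hh w"
    by (simp add: vec_eq_iff hh_def q_def[symmetric] cq mult_ac)
qed

lemma householder:
  fixes u v :: "complex^'n"
  assumes uu: "cinner u u = cinner v v" and uv: "cnj (cinner u v) = cinner u v"
  obtains W where "W ** W = mat 1" "cadj W = W" "W *v u = v"
    "\<And>i. u$i = 0 \<Longrightarrow> v$i = 0 \<Longrightarrow> W *v axis i 1 = axis i 1"
proof (cases "u = v")
  case True
  show ?thesis by (rule that[of "mat 1"]) (simp_all add: True)
next
  case False
  define w where "w = u - v"
  have w0: "w \<noteq> 0" using False by (simp add: w_def)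
  define q where "q = cinner w w"
  have q0: "q \<noteq> 0" using cinner_self_eq0[of w] w0 by (auto simp: q_def)
  have vu: "cinner v u = cinner u v" using uv cnj_cinner by metis
  have q2: "q = 2 * cinner w u"
    by (simp add: q_def w_def cinner_diff_left cinner_diff_right uu vu)
  have "hh w *v u = u - ((2 / q) * cinner w u) *s w" by (simp add: hh_apply q_def)
  also have "(2 / q) * cinner w u = 1" using q0 by (simp add: q2)
  finally have "hh w *v u = v" by (simp add: w_def)
  moreover have "hh w *v axis i 1 = axis i 1" if "u$i = 0" "v$i = 0" for i
    using that by (simp add: hh_apply cinner_axis_right w_def)
  ultimately show ?thesis using that[of "hh w"] hh_props[OF w0] by blast
qed


lemma herm_entry: "cadj D = D \<Longrightarrow> D$i$j = cnj (D$j$i)"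
  by (metis cadj_nth)

lemma closed_supp: "closed {x::complex^'n. \<forall>i\<in>S. x$i = 0}"
proof -
  have "{x::complex^'n. \<forall>i\<in>S. x$i = 0} = (\<Inter>i\<in>S. {x. x$i = 0})" by auto
  also have "closed \<dots>"
    by (intro closed_INT ballI closed_Collect_eq continuous_on_component continuous_on_id continuous_on_const)
  finally show ?thesis .
qed

lemma eigvec_exists:
  fixes D :: "complex^'n^'n"
  assumes herm: "cadj D = D" and diag: "\<And>a b. a \<noteq> b \<Longrightarrow> b \<in> S \<Longrightarrow> D$a$b = 0"
    and j0: "j0 \<notin> S"
  shows "\<exists>x \<mu>. (\<forall>i\<in>S. x$i = 0) \<and> norm x = 1 \<and> D *v x = complex_of_real \<mu> *s x"
proof -
  let ?Z = "{x::complex^'n. \<forall>i\<in>S. x$i = 0} \<inter> sphere 0 1"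
  have cpt: "compact ?Z" by (intro closed_Int_compact closed_supp compact_sphere)
  have "norm (axis j0 (1::complex)) = 1" by (simp add: norm_cinner cinner_axis_left)
  then have ne: "axis j0 1 \<in> ?Z" using j0
    by (auto simp: axis_def)
  define f where "f x = Re (cquad D x)" for x
  have cont: "continuous_on UNIV f" unfolding f_def cquad_def matrix_vector_mult_def
    by (intro continuous_intros)
  obtain x where x: "x \<in> ?Z" and mx: "\<And>y. y \<in> ?Z \<Longrightarrow> f y \<le> f x"
    using continuous_attains_sup[OF cpt _ continuous_on_subset[OF cont]] ne by blast
  define \<mu> where "\<mu> = f x"
  define E where "E = mat (complex_of_real \<mu>) - D"
  have hE: "cadj E = E" using herm by (simp add: E_def cadj_diff)
  have Eapp: "E *v z = complex_of_real \<mu> *s z - D *v z" for z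
    by (simp add: E_def matrix_vector_mult_def vec_eq_iff mat_def left_diff_distrib sum_subtractf
        if_distrib[of "\<lambda>x. x * _"] cong: if_cong)
  have qE: "Re (cquad E z) = \<mu> * Re (cinner z z) - Re (cquad D z)" for z
    by (simp add: cquad_cinner Eapp cinner_diff_right cinner_smult_right)
  have Enn: "0 \<le> Re (cquad E z)" if zS: "\<forall>i\<in>S. z$i = 0" for z
  proof (cases "z = 0")
    case True then show ?thesis by (simp add: cquad_def)
  next
    case False
    define n where "n = norm z"
    have n0: "n > 0" using False by (simp add: n_def)
    define y where "y = (1/n) *\<^sub>R z"
    have "y \<in> ?Z" using zS n0 by (auto simp: y_def n_def)
    then have "f y \<le> \<mu>" using mx by (simp add: \<mu>_def)
    moreover have "f y = (1/n)^2 * f z"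
      by (simp add: f_def y_def cquad_scaleR del: of_real_power)
    ultimately have "f z \<le> n^2 * \<mu>" using n0 by (simp add: field_simps)
    moreover have "n^2 = Re (cinner z z)" by (simp add: n_def norm_sq_cinner)
    ultimately show ?thesis by (simp add: qE f_def mult.commute)
  qed
  have nx: "norm x = 1" and xS: "\<forall>i\<in>S. x$i = 0" using x by auto
  have Ex: "Re (cquad E x) = 0"
    using nx norm_sq_cinner[of x] by (simp add: qE \<mu>_def f_def)
  have Ex0: "E *v x = 0"
  proof (subst vec_eq_iff, intro allI)
    fix i
    show "(E *v x) $ i = 0 $ i"
    proof (cases "i \<in> S")
      case False
      have "cinner (axis i 1) (E *v x) = 0"
        by (rule quad_zero[OF hE, where P="\<lambda>z. \<forall>i\<in>S. z$i = 0"])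
           (use Enn xS Ex False in \<open>auto simp: axis_def\<close>)
      then show ?thesis by (simp add: cinner_axis_left)
    next
      case True
      have dz: "D$i$j * x$j = 0" for j
      proof (cases "j = i")
        case True then show ?thesis using xS \<open>i \<in> S\<close> by simp
      next
        case False
        then have "D$j$i = 0" using diag \<open>i \<in> S\<close> by blast
        then show ?thesis using herm_entry[OF herm, of i j] by simp
      qed
      have "(D *v x) $ i = 0" unfolding matrix_vector_mult_def
        by (simp only: vec_lambda_beta dz sum.neutral_const)
      then show ?thesis using xS True by (simp add: Eapp)
    qed
  qed
  then have "D *v x = complex_of_real \<mu> *s x" by (simp add: Eapp)
  then show ?thesis using nx xS by blast
qed


lemma col_diag_apply:
  assumes "\<And>a. a \<noteq> b \<Longrightarrow> D$a$b = 0"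
  shows "D *v axis b 1 = D$b$b *s axis b (1::complex)"
proof (subst vec_eq_iff, intro allI)
  fix i
  have "(D *v axis b 1)$i = D$i$b" by (simp only: mat_entry_axis)
  then show "(D *v axis b 1)$i = (D$b$b *s axis b 1)$i"
    using assms by (cases "i = b") (auto simp: axis_def)
qed

lemma spectral_aux:
  fixes A :: "complex^'n^'n"
  assumes herm: "cadj A = A"
  shows "k \<le> CARD('n) \<Longrightarrow> \<exists>S U. card S = k \<and> unitary U \<and>
           (\<forall>a b. a \<noteq> b \<longrightarrow> b \<in> S \<longrightarrow> (cadj U ** A ** U)$a$b = 0)"
proof (induction k)
  case 0 show ?case
    by (rule exI[of _ "{}"], rule exI[of _ "mat 1"]) (simp add: unitary_def)
next
  case (Suc k)
  then obtain S U where S: "card S = k" and U: "unitary U"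
    and dg: "\<forall>a b. a \<noteq> b \<longrightarrow> b \<in> S \<longrightarrow> (cadj U ** A ** U)$a$b = 0" by auto
  define D where "D = cadj U ** A ** U"
  have hD: "cadj D = D" by (simp add: D_def cadj_mult herm matrix_mul_assoc)
  have dgD: "\<And>a b. a \<noteq> b \<Longrightarrow> b \<in> S \<Longrightarrow> D$a$b = 0" using dg by (simp add: D_def)
  have "S \<noteq> UNIV" using Suc.prems S by auto
  then obtain j0 where j0: "j0 \<notin> S" by blast
  obtain x \<mu> where xS: "\<forall>i\<in>S. x$i = 0" and nx: "norm x = 1"
    and ev: "D *v x = complex_of_real \<mu> *s x"
    using eigvec_exists[OF hD dgD j0] by blast
  define \<alpha> where "\<alpha> = (if x$j0 = 0 then 1 else x$j0 / complex_of_real (cmod (x$j0)))"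
  have a1: "cnj \<alpha> * \<alpha> = 1"
  proof (cases "x$j0 = 0")
    case True then show ?thesis by (simp add: \<alpha>_def)
  next
    case False
    have "cnj \<alpha> * \<alpha> = (x$j0 * cnj (x$j0)) / (complex_of_real (cmod (x$j0)))^2"
      using False by (simp add: \<alpha>_def power2_eq_square mult_ac)
    also have "\<dots> = 1" using False by (simp add: complex_norm_square[symmetric] of_real_power)
    finally show ?thesis .
  qed
  have a0: "\<alpha> \<noteq> 0" using a1 by auto
  define u where "u = \<alpha> *s axis j0 1"
  have xx: "cinner x x = 1"
    using nx norm_sq_cinner[of x] by (simp add: cinner_self complex_eq_iff)
  have uu: "cinner u u = cinner x x"
    by (simp add: u_def cinner_smult_left cinner_smult_right cinner_axis_left xx a1 mult.assoc[symmetric] mult.commute[of \<alpha>])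
  have ux: "cinner u x = complex_of_real (cmod (x$j0))"
  proof (cases "x$j0 = 0")
    case True then show ?thesis
      by (simp add: u_def cinner_smult_left cinner_axis_left)
  next
    case False
    have "cnj (x $ j0) * x $ j0 = complex_of_real (cmod (x$j0))^2"
      by (simp add: complex_norm_square[symmetric] of_real_power mult.commute)
    then show ?thesis using False
      by (simp add: u_def cinner_smult_left cinner_axis_left \<alpha>_def power2_eq_square)
  qed
  then have ux': "cnj (cinner u x) = cinner u x" by simp
  obtain W where WW: "W ** W = mat 1" and hW: "cadj W = W" and Wu: "W *v u = x"
    and Wax: "\<And>i. u$i = 0 \<Longrightarrow> x$i = 0 \<Longrightarrow> W *v axis i 1 = axis i 1"
    using householder[OF uu ux'] by blast
  define U' where "U' = U ** W"
  have uW: "unitary W" using WW hW by (simp add: unitary_def)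
  have U': "unitary U'" using unitary_mult[OF U uW] by (simp add: U'_def)
  have D': "cadj U' ** A ** U' = W ** D ** W"
    by (simp add: U'_def D_def cadj_mult hW matrix_mul_assoc)
  have Wx: "W *v x = u" using Wu WW by (metis matrix_vector_mul_assoc matrix_vector_mul_lid)
  have col: "(W ** D ** W)$a$b = 0" if ab: "a \<noteq> b" and b: "b \<in> insert j0 S" for a b
  proof -
    have "\<exists>c. (W ** D ** W) *v axis b 1 = c *s axis b 1"
    proof (cases "b \<in> S")
      case True
      then have bj: "b \<noteq> j0" using j0 by auto
      have Wb: "W *v axis b 1 = axis b 1"
        using Wax[of b] True xS bj by (simp add: u_def axis_def)
      have "(W ** D ** W) *v axis b 1 = W *v (D *v (W *v axis b 1))"
        by (simp add: matrix_vector_mul_assoc matrix_mul_assoc)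
      also have "\<dots> = D$b$b *s axis b 1"
        using Wb col_diag_apply[of b D] dgD True by (simp add: mvec_smult)
      finally show ?thesis by blast
    next
      case False
      then have bj: "b = j0" using b by auto
      have Wb: "W *v axis j0 1 = inverse \<alpha> *s x"
      proof -
        have "axis j0 1 = inverse \<alpha> *s u" using a0 by (simp add: u_def vector_smult_assoc)
        then show ?thesis by (metis Wu mvec_smult)
      qed
      have "(W ** D ** W) *v axis b 1 = W *v (D *v (W *v axis j0 1))"
        by (simp add: matrix_vector_mul_assoc matrix_mul_assoc bj)
      also have "\<dots> = (inverse \<alpha> * complex_of_real \<mu> * \<alpha>) *s axis j0 1"
        by (simp add: Wb mvec_smult ev Wx vector_smult_assoc u_def mult.assoc)
      finally show ?thesis by (auto simp: bj)
    qed
    then obtain c where "(W ** D ** W) *v axis b 1 = c *s axis b 1" by blast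
    then show ?thesis using ab by (simp add: mat_entry_axis[of _ a b] axis_def)
  qed
  have "card (insert j0 S) = Suc k" using j0 S by (simp add: card_insert_if)
  then show ?case using U' col D' by metis
qed

theorem spectral:
  fixes A :: "complex^'n^'n"
  assumes herm: "cadj A = A"
  shows "\<exists>U. unitary U \<and> (\<forall>a b. a \<noteq> b \<longrightarrow> (cadj U ** A ** U)$a$b = 0)"
proof -
  obtain S U where S: "card S = CARD('n)" and U: "unitary U"
    and dg: "\<forall>a b. a \<noteq> b \<longrightarrow> b \<in> S \<longrightarrow> (cadj U ** A ** U)$a$b = 0"
    using spectral_aux[OF herm, of "CARD('n)"] by auto
  have "S = UNIV" using card_eq_UNIV_imp_eq_UNIV[OF _ S] by simp
  then show ?thesis using U dg by blast
qed


lemma mm_add_r: "(A + B) ** C = A ** C + B ** (C::complex^'n^'n)"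
  by (simp add: vec_eq_iff matrix_matrix_mult_def distrib_right sum.distrib)
lemma mm_add_l: "C ** (A + B) = C ** A + C ** (B::complex^'n^'n)"
  by (rule matrix_add_ldistrib)
lemma mm_diff_r: "(A - B) ** C = A ** C - B ** (C::complex^'n^'n)"
  by (simp add: vec_eq_iff matrix_matrix_mult_def left_diff_distrib sum_subtractf)
lemma mm_diff_l: "C ** (A - B) = C ** A - C ** (B::complex^'n^'n)"
  by (simp add: vec_eq_iff matrix_matrix_mult_def right_diff_distrib sum_subtractf)
lemma mm_zero_l[simp]: "0 ** (A::complex^'n^'n) = 0"
  by (simp add: vec_eq_iff matrix_matrix_mult_def)
lemma mm_zero_r[simp]: "(A::complex^'n^'n) ** 0 = 0"
  by (simp add: vec_eq_iff matrix_matrix_mult_def)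

definition dg :: "('n \<Rightarrow> complex) \<Rightarrow> complex^'n^'n" where
  "dg f = (\<chi> a b. if a = b then f a else 0)"

lemma dg_entry: "dg f $ a $ b = (if a = b then f a else 0)" by (simp add: dg_def)

lemma mult_dg_r: "(G ** dg f) $ i $ j = G$i$j * f j"
proof -
  have "(G ** dg f) $ i $ j = (\<Sum>k\<in>UNIV. if k = j then G$i$k * f k else 0)"
    unfolding matrix_matrix_mult_def vec_lambda_beta by (intro sum.cong) (auto simp: dg_def)
  then show ?thesis by simp
qed

lemma mult_dg_l: "(dg f ** G) $ i $ j = f i * G$i$j"
proof -
  have "(dg f ** G) $ i $ j = (\<Sum>k\<in>UNIV. if k = i then f k * G$k$j else 0)"
    unfolding matrix_matrix_mult_def vec_lambda_beta by (intro sum.cong) (auto simp: dg_def)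
  then show ?thesis by simp
qed

lemma dg_mult: "dg f ** dg g = dg (\<lambda>i. f i * g i)"
  by (simp add: vec_eq_iff mult_dg_r dg_entry)

lemma cadj_dg: "cadj (dg f) = dg (\<lambda>i. cnj (f i))"
  by (simp add: vec_eq_iff dg_entry)

lemma cquad_dg: "cquad (dg f) y = (\<Sum>i\<in>UNIV. f i * (cnj (y$i) * y$i))"
proof -
  have "(dg f *v y) $ i = f i * y $ i" for i
  proof -
    have "(dg f *v y) $ i = (\<Sum>k\<in>UNIV. if k = i then f k * y$k else 0)"
      unfolding matrix_vector_mult_def vec_lambda_beta by (intro sum.cong) (auto simp: dg_def)
    then show ?thesis by simp
  qed
  then show ?thesis by (simp add: cquad_cinner cinner_def mult_ac)
qed

lemma diag_eq_dg: "(\<forall>a b. a \<noteq> b \<longrightarrow> D$a$b = 0) \<Longrightarrow> D = dg (\<lambda>i. D$i$i)"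
  by (auto simp: vec_eq_iff dg_entry)

lemma cquad_axis: "cquad D (axis i 1) = D$i$i"
  by (simp add: cquad_cinner cinner_axis_left mat_entry_axis[symmetric])

lemma unitary_simps:
  assumes "unitary U"
  shows "cadj U ** U = mat 1" "U ** cadj U = mat 1"
    "X ** cadj U ** U = X" "X ** U ** cadj U = X"
  using assms unitary_right[OF assms]
  by (auto simp: unitary_def matrix_mul_assoc[symmetric])

lemma psd_congr: "psd A \<Longrightarrow> psd (cadj T ** A ** T)"
  by (simp add: psd_def cadj_mult matrix_mul_assoc cquad_congr)

lemma psd_udg:
  assumes "\<And>i. 0 \<le> d i"
  shows "psd (U ** dg (\<lambda>i. complex_of_real (d i)) ** cadj U)"
proof -
  have "psd (dg (\<lambda>i. complex_of_real (d i)))"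
    unfolding psd_def cadj_dg cquad_dg using assms
    by (auto intro!: sum_nonneg simp: complex_mult_cnj)
  from psd_congr[OF this, of "cadj U"] show ?thesis by simp
qed

lemma psd_diag:
  assumes "psd A"
  obtains U d where "unitary U" "\<And>i. 0 \<le> d i" "A = U ** dg (\<lambda>i. complex_of_real (d i)) ** cadj U"
proof -
  have herm: "cadj A = A" using assms by (simp add: psd_def)
  obtain U where U: "unitary U" and dg0: "\<forall>a b. a \<noteq> b \<longrightarrow> (cadj U ** A ** U)$a$b = 0"
    using spectral[OF herm] by blast
  define D where "D = cadj U ** A ** U"
  have hD: "cadj D = D" by (simp add: D_def cadj_mult herm matrix_mul_assoc)
  have Dd: "D = dg (\<lambda>i. D$i$i)" using dg0 diag_eq_dg by (simp add: D_def)
  define d where "d i = Re (D$i$i)" for i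
  have nn: "0 \<le> d i" for i
  proof -
    have "cquad D (axis i 1) = cquad A (U *v axis i 1)" by (simp add: D_def cquad_congr)
    then show ?thesis using assms by (simp add: psd_def d_def cquad_axis)
  qed
  have re: "D$i$i = complex_of_real (d i)" for i
    using herm_entry[OF hD, of i i] by (simp add: d_def complex_eq_iff)
  have "A = U ** D ** cadj U" using U by (simp add: D_def matrix_mul_assoc unitary_simps)
  also have "D = dg (\<lambda>i. complex_of_real (d i))"
    by (subst Dd) (simp add: re)
  finally show ?thesis using that U nn by blast
qed

lemma sqrt_exists:
  assumes "psd A"
  shows "\<exists>B. psd B \<and> B ** B = A"
proof -
  obtain U d where U: "unitary U" and nn: "\<And>i. 0 \<le> d i"
    and A: "A = U ** dg (\<lambda>i. complex_of_real (d i)) ** cadj U"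
    using psd_diag[OF assms] by blast
  define B where "B = U ** dg (\<lambda>i. complex_of_real (sqrt (d i))) ** cadj U"
  have "psd B" unfolding B_def by (rule psd_udg) (simp add: nn)
  moreover have "B ** B = A"
  proof -
    have "B ** B = U ** (dg (\<lambda>i. complex_of_real (sqrt (d i))) ** dg (\<lambda>i. complex_of_real (sqrt (d i)))) ** cadj U"
      using U by (simp add: B_def matrix_mul_assoc unitary_simps)
    also have "dg (\<lambda>i. complex_of_real (sqrt (d i))) ** dg (\<lambda>i. complex_of_real (sqrt (d i)))
        = dg (\<lambda>i. complex_of_real (d i))"
      using nn by (simp add: dg_mult flip: of_real_mult)
    finally show ?thesis by (simp add: A)
  qed
  ultimately show ?thesis by blast
qed

lemma comm_sqrt:
  assumes B: "psd B" and H: "H ** (B ** B) = (B ** B) ** H"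
  shows "H ** B = B ** H"
proof -
  obtain U b where U: "unitary U" and nn: "\<And>i. 0 \<le> b i"
    and Bd: "B = U ** dg (\<lambda>i. complex_of_real (b i)) ** cadj U"
    using psd_diag[OF B] by blast
  define E where "E = dg (\<lambda>i. complex_of_real (b i))"
  define G where "G = cadj U ** H ** U"
  have HG: "H = U ** G ** cadj U" using U by (simp add: G_def matrix_mul_assoc unitary_simps)
  have BB: "B ** B = U ** (E ** E) ** cadj U"
    using U by (simp add: Bd E_def matrix_mul_assoc unitary_simps)
  have "U ** (G ** (E ** E)) ** cadj U = U ** ((E ** E) ** G) ** cadj U"
    using H unfolding HG BB using U by (simp add: matrix_mul_assoc unitary_simps)
  then have "cadj U ** (U ** (G ** (E ** E)) ** cadj U) ** U = cadj U ** (U ** ((E ** E) ** G) ** cadj U) ** U"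
    by simp
  then have GE2: "G ** (E ** E) = (E ** E) ** G"
    using U by (simp add: matrix_mul_assoc unitary_simps)
  have "G ** E = E ** G"
  proof -
    have "G$i$j * complex_of_real (b j) = complex_of_real (b i) * G$i$j" for i j
    proof -
      have "(G ** (E ** E))$i$j = ((E ** E) ** G)$i$j" using GE2 by simp
      then have e: "G$i$j * complex_of_real (b j * b j) = complex_of_real (b i * b i) * G$i$j"
        by (simp add: E_def dg_mult mult_dg_r mult_dg_l)
      show ?thesis
      proof (cases "G$i$j = 0")
        case False
        then have "complex_of_real (b j * b j) = complex_of_real (b i * b i)" using e by (simp add: mult.commute)
        then have "b j * b j = b i * b i" using of_real_eq_iff by blast
        then have "b j = b i" using nn[of i] nn[of j]
          by (metis abs_of_nonneg real_sqrt_abs2 power2_eq_square)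
        then show ?thesis by (simp add: mult.commute)
      qed simp
    qed
    then show ?thesis by (simp add: vec_eq_iff E_def mult_dg_r mult_dg_l)
  qed
  then show ?thesis unfolding HG Bd E_def[symmetric]
    using U by (simp add: matrix_mul_assoc unitary_simps) (metis matrix_mul_assoc)
qed


lemma sqrt_unique:
  assumes B: "psd B" and C: "psd C" and BC: "B ** B = C ** C"
  shows "B = C"
proof -
  have "C ** (B ** B) = (B ** B) ** C" by (simp add: BC matrix_mul_assoc)
  then have cb: "C ** B = B ** C" using comm_sqrt[OF B] by blast
  define D where "D = B - C"
  have hD: "cadj D = D" using B C by (simp add: D_def cadj_diff psd_def)
  have z: "(B + C) ** D = 0"
    by (simp add: D_def mm_diff_l mm_add_r cb BC)
  have Dx: "D *v x = 0" for x
  proof -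
    let ?y = "D *v x"
    have "cquad B ?y + cquad C ?y = cinner ?y ((B + C) *v ?y)"
      by (simp add: cquad_cinner matrix_vector_mult_add_rdistrib cinner_add_right)
    also have "(B + C) *v ?y = 0" using z by (simp add: matrix_vector_mul_assoc)
    finally have "Re (cquad B ?y + cquad C ?y) = 0" by simp
    then have s: "Re (cquad B ?y) + Re (cquad C ?y) = 0" by simp
    have "0 \<le> Re (cquad B ?y)" "0 \<le> Re (cquad C ?y)" using B C by (auto simp: psd_def)
    then have "Re (cquad B ?y) = 0" "Re (cquad C ?y) = 0" using s by linarith+
    then have "B *v ?y = 0" "C *v ?y = 0" using psd_zero B C by blast+
    then have "D *v ?y = 0" by (simp add: D_def matrix_vector_mult_diff_rdistrib)
    then have "cinner ?y ?y = 0" using herm_cinner[OF hD, of x ?y] by simp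
    then show ?thesis using cinner_self_eq0 by (metis zero_complex.simps(1))
  qed
  have "D = 0" by (subst matrix_eq) (simp add: Dx)
  then show ?thesis by (simp add: D_def)
qed

lemma msqrt_eq: "psd B \<Longrightarrow> B ** B = A \<Longrightarrow> msqrt A = B"
  unfolding msqrt_def by (rule the_equality) (auto intro: sqrt_unique)

lemma msqrt:
  assumes "psd A"
  shows "psd (msqrt A)" "msqrt A ** msqrt A = A"
proof -
  obtain B where B: "psd B" "B ** B = A" using sqrt_exists[OF assms] by blast
  then have "msqrt A = B" using msqrt_eq by blast
  then show "psd (msqrt A)" "msqrt A ** msqrt A = A" using B by auto
qed

lemma psd_mult_comm:
  assumes X: "psd X" and Y: "psd Y" and XY: "X ** Y = Y ** X"
  shows "psd (X ** Y)"
proof -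
  define R where "R = msqrt X"
  have R: "psd R" "R ** R = X" using msqrt[OF X] by (auto simp: R_def)
  have "Y ** R = R ** Y" using comm_sqrt[OF R(1), of Y] R(2) XY by simp
  then have "X ** Y = cadj R ** Y ** R"
    using R by (simp add: psd_def matrix_mul_assoc flip: R(2)) (simp add: matrix_mul_assoc[symmetric])
  then show ?thesis using psd_congr[OF Y] by simp
qed

lemma pd_psd: "pd A \<Longrightarrow> psd A"
  unfolding pd_def psd_def
proof (intro conjI allI, simp)
  fix x assume "cadj A = A \<and> (\<forall>x. x \<noteq> 0 \<longrightarrow> 0 < Re (cquad A x))"
  then show "0 \<le> Re (cquad A x)" by (cases "x = 0") (auto simp: cquad_def less_imp_le)
qed

lemma inj_invertible:
  fixes A :: "complex^'n^'n"
  assumes "\<And>x. A *v x = 0 \<Longrightarrow> x = 0"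
  shows "invertible A"
proof -
  have "inj ((*v) A)"
  proof (rule injI)
    fix x y assume "A *v x = A *v y"
    then have "A *v (x - y) = 0" by (simp add: matrix_vector_mult_diff_distrib)
    then show "x = y" using assms[of "x - y"] by simp
  qed
  then have "det (matrix ((*v) A)) \<noteq> 0"
    using det_nz_iff_inj_gen[OF matrix_vector_mul_linear_gen] by blast
  then show ?thesis by (simp add: invertible_det_nz)
qed

lemma pd_invertible:
  assumes "pd A" shows "invertible A"
proof (rule inj_invertible)
  fix x assume "A *v x = 0"
  then have "cquad A x = 0" by (simp add: cquad_cinner)
  then show "x = 0" using assms by (auto simp: pd_def)
qed

lemma invertible_kernel: "invertible (A::complex^'n^'n) \<Longrightarrow> A *v x = 0 \<Longrightarrow> x = 0"
  using inj_matrix_vector_mult[of A] by (metis injD matrix_vector_mult_0_right)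

lemma psd_invertible_pd:
  fixes A :: "complex^'n^'n"
  assumes "psd A" "invertible A" shows "pd A"
  unfolding pd_def
proof (intro conjI allI impI)
  show "cadj A = A" using assms by (simp add: psd_def)
  fix x :: "complex^'n" assume x: "x \<noteq> 0"
  have "Re (cquad A x) \<noteq> 0" using psd_zero[OF assms(1)] invertible_kernel[OF assms(2)] x by blast
  moreover have "0 \<le> Re (cquad A x)" using assms by (simp add: psd_def)
  ultimately show "0 < Re (cquad A x)" by simp
qed


lemma mat_mult_l_entry: "(mat c ** A) $ i $ j = c * (A::complex^'n^'n) $ i $ j"
proof -
  have "(mat c ** A) $ i $ j = (\<Sum>k\<in>UNIV. if k = i then c * A$k$j else 0)"
    unfolding matrix_matrix_mult_def vec_lambda_beta by (intro sum.cong) (auto simp: mat_def)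
  then show ?thesis by simp
qed

lemma mat_mult_r_entry: "(A ** mat c) $ i $ j = (A::complex^'n^'n) $ i $ j * c"
proof -
  have "(A ** mat c) $ i $ j = (\<Sum>k\<in>UNIV. if k = j then A$i$k * c else 0)"
    unfolding matrix_matrix_mult_def vec_lambda_beta by (intro sum.cong) (auto simp: mat_def)
  then show ?thesis by simp
qed

lemma mat_comm: "A ** mat c = mat c ** (A::complex^'n^'n)"
  by (simp add: vec_eq_iff mat_mult_l_entry mat_mult_r_entry mult.commute)

lemma mat_mat: "mat a ** mat b = (mat (a * b) :: complex^'n^'n)"
  by (simp add: vec_eq_iff mat_mult_l_entry) (simp add: mat_def)

lemma mat_diff: "mat a - mat b = (mat (a - b) :: complex^'n^'n)"
  by (simp add: vec_eq_iff mat_def)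

lemma inv_simps:
  assumes "invertible (R::complex^'n^'n)"
  shows "R ** matrix_inv R = mat 1" "matrix_inv R ** R = mat 1"
    "X ** R ** matrix_inv R = X" "X ** matrix_inv R ** R = X"
  using minv[OF assms] by (auto simp: matrix_mul_assoc[symmetric])

lemma herm_inv:
  assumes "cadj R = R" "invertible (R::complex^'n^'n)"
  shows "cadj (matrix_inv R) = matrix_inv R"
proof -
  have "R ** cadj (matrix_inv R) = mat 1"
    using arg_cong[OF inv_simps(2)[OF assms(2)], of cadj] assms(1) by (simp add: cadj_mult)
  then show ?thesis using minv_unique by metis
qed

lemma J_decomp: "J = mRe J + mat \<i> ** mIm J"
  by (simp add: vec_eq_iff mat_mult_l_entry mRe_def mIm_def complex_eq_iff)

lemma JT_decomp: "cadj J = J \<Longrightarrow> transpose J = mRe J - mat \<i> ** mIm J"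
proof -
  assume h: "cadj J = J"
  have "transpose J $ i $ j = (mRe J - mat \<i> ** mIm J) $ i $ j" for i j
  proof -
    have e: "transpose J $ i $ j = cnj (J $ i $ j)" using herm_entry[OF h, of j i] by (simp add: transpose_def)
    have r: "(mRe J - mat \<i> ** mIm J) $ i $ j = of_real (Re (J$i$j)) - \<i> * of_real (Im (J$i$j))"
      by (simp add: mat_mult_l_entry mRe_def mIm_def)
    have c: "cnj z = of_real (Re z) - \<i> * of_real (Im z)" for z by (simp add: complex_eq_iff)
    show ?thesis using e r c by metis
  qed
  then show ?thesis by (simp add: vec_eq_iff)
qed

lemma cquad_transpose: "cquad (transpose J) x = cquad J (\<chi> i. cnj (x$i))"
proof -
  have "cquad (transpose J) x = (\<Sum>i\<in>UNIV. \<Sum>j\<in>UNIV. cnj (x$i) * J$j$i * x$j)"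
    by (simp add: cquad_def matrix_vector_mult_def transpose_def sum_distrib_left mult.assoc)
  also have "\<dots> = (\<Sum>j\<in>UNIV. \<Sum>i\<in>UNIV. cnj (x$i) * J$j$i * x$j)" by (rule sum.swap)
  also have "\<dots> = cquad J (\<chi> i. cnj (x$i))"
    by (simp add: cquad_def matrix_vector_mult_def sum_distrib_left mult_ac)
  finally show ?thesis .
qed

lemma psd_transpose: "psd J \<Longrightarrow> psd (transpose J)"
proof -
  assume J: "psd J"
  then have h: "cadj J = J" by (simp add: psd_def)
  have "cadj (transpose J) = transpose J"
    by (simp add: vec_eq_iff transpose_def) (metis herm_entry h)
  moreover have "0 \<le> Re (cquad (transpose J) x)" for x
    using J by (simp add: cquad_transpose psd_def)
  ultimately show ?thesis by (simp add: psd_def)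
qed

lemma pd_transpose: "pd J \<Longrightarrow> pd (transpose J)"
proof -
  assume J: "pd J"
  then have h: "cadj J = J" by (simp add: pd_def)
  have "cadj (transpose J) = transpose J"
    by (simp add: vec_eq_iff transpose_def) (metis herm_entry h)
  moreover have "0 < Re (cquad (transpose J) x)" if "x \<noteq> 0" for x
  proof -
    have "(\<chi> i. cnj (x$i)) \<noteq> 0" using that by (auto simp: vec_eq_iff)
    then show ?thesis using J by (simp add: cquad_transpose pd_def)
  qed
  ultimately show ?thesis by (simp add: pd_def)
qed

lemma riccati:
  assumes P: "pd P" and Y: "psd Y" and Q: "Y ** matrix_inv P ** Y = Q"
  shows "gmean_pd P Q = Y"
proof -
  define R where "R = msqrt P"
  have R: "psd R" "R ** R = P" using msqrt[OF pd_psd[OF P]] by (auto simp: R_def)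
  have Pinv: "invertible P" using pd_invertible[OF P] .
  have Rinv: "invertible R"
  proof (rule inj_invertible)
    fix x assume "R *v x = 0"
    then have "P *v x = 0" by (metis R(2) matrix_vector_mul_assoc matrix_vector_mult_0_right)
    then show "x = 0" using invertible_kernel[OF Pinv] by blast
  qed
  define Ri where "Ri = matrix_inv R"
  have hRi: "cadj Ri = Ri" using herm_inv[OF _ Rinv] R(1) by (simp add: Ri_def psd_def)
  have Pi: "matrix_inv P = Ri ** Ri"
    by (rule minv_unique) (simp add: R(2)[symmetric] Ri_def matrix_mul_assoc inv_simps[OF Rinv])
  define Z where "Z = Ri ** Y ** Ri"
  have Zpsd: "psd Z" using psd_congr[OF Y, of Ri] hRi by (simp add: Z_def)
  have ZZ: "Z ** Z = Ri ** Q ** Ri"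
    by (simp add: Z_def Q[symmetric] Pi matrix_mul_assoc)
  have m: "msqrt (Ri ** Q ** Ri) = Z" using msqrt_eq[OF Zpsd ZZ] .
  have a: "R ** Ri = mat 1" "X ** Ri ** R = X" for X using inv_simps[OF Rinv] by (auto simp: Ri_def)
  show ?thesis using m
    by (simp add: gmean_pd_def Let_def R_def[symmetric] Ri_def[symmetric] Z_def matrix_mul_assoc a)
qed


definition Fm :: "complex^'n^'n \<Rightarrow> complex^'n^'n" where
  "Fm J = (let V = mRe J; S = mIm J; Vh = msqrt V; Vhi = matrix_inv Vh;
         K = Vhi ** S ** Vhi in Vh ** msqrt (mat 1 + K ** K) ** Vh)"

lemma mm_uminus_l: "(- A) ** B = - (A ** (B::complex^'n^'n))"
  by (simp add: vec_eq_iff matrix_matrix_mult_def sum_negf)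
lemma mm_uminus_r: "A ** (- B) = - (A ** (B::complex^'n^'n))"
  by (simp add: vec_eq_iff matrix_matrix_mult_def sum_negf)
lemma mat_pass: "(A::complex^'n^'n) ** (mat c ** B) = mat c ** (A ** (B::complex^'n^'n))"
  by (simp only: matrix_mul_assoc mat_comm[of A])
lemma mat_neg1: "mat (-1) ** A = - (A::complex^'n^'n)"
  by (simp add: vec_eq_iff mat_mult_l_entry)

lemma psd_herm: "psd A \<Longrightarrow> cadj A = A" by (simp add: psd_def)

lemma sqrt_invertible:
  assumes "pd V" "psd Vh" "Vh ** Vh = V"
  shows "invertible Vh"
proof (rule inj_invertible)
  fix x assume "Vh *v x = 0"
  then have "V *v x = 0" by (metis assms(3) matrix_vector_mul_assoc matrix_vector_mult_0_right)
  then show "x = 0" using invertible_kernel[OF pd_invertible[OF assms(1)]] by blast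
qed

lemma pd_case:
  fixes J :: "complex^'n^'n"
  assumes J: "psd J" and Jpd: "pd J" and Vpd: "pd (mRe J)"
  shows "gmean_pd J (transpose J) = Fm J"
proof -
  define V where "V = mRe J"
  define S where "S = mIm J"
  define Vh where "Vh = msqrt V"
  have Vh: "psd Vh" "Vh ** Vh = V" using msqrt[OF pd_psd[OF Vpd]] by (auto simp: Vh_def V_def)
  have Vhinv: "invertible Vh" using sqrt_invertible[OF Vpd] Vh by (simp add: V_def)
  have hVh: "cadj Vh = Vh" using Vh by (simp add: psd_def)
  define Vhi where "Vhi = matrix_inv Vh"
  have a: "Vh ** Vhi = mat 1" "Vhi ** Vh = mat 1" "X ** Vh ** Vhi = X" "X ** Vhi ** Vh = X" for X :: "complex^'n^'n"
    using inv_simps[OF Vhinv] by (auto simp: Vhi_def)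
  have hVhi: "cadj Vhi = Vhi" using herm_inv[OF hVh Vhinv] by (simp add: Vhi_def)
  define K where "K = Vhi ** S ** Vhi"
  define H where "H = mat \<i> ** K"
  have VKV: "Vh ** K ** Vh = S" by (simp add: K_def matrix_mul_assoc a)
  have VhH: "Vh ** H ** Vh = mat \<i> ** S"
    by (simp add: H_def mat_pass) (metis VKV matrix_mul_assoc)
  have JH: "J = Vh ** (mat 1 + H) ** Vh"
  proof -
    have "Vh ** (mat 1 + H) ** Vh = V + Vh ** H ** Vh"
      by (simp add: mm_add_l mm_add_r Vh)
    also have "\<dots> = mRe J + mat \<i> ** mIm J" by (simp add: VhH V_def S_def)
    also have "\<dots> = J" by (rule J_decomp[symmetric])
    finally show ?thesis by simp
  qed
  have JTH: "transpose J = Vh ** (mat 1 - H) ** Vh"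
  proof -
    have "Vh ** (mat 1 - H) ** Vh = V - Vh ** H ** Vh"
      by (simp add: mm_diff_l mm_diff_r Vh)
    also have "\<dots> = transpose J" using JT_decomp[OF psd_herm[OF J]] by (simp add: VhH V_def S_def)
    finally show ?thesis by simp
  qed
  have P1: "mat 1 + H = cadj Vhi ** J ** Vhi" unfolding JH hVhi by (simp add: matrix_mul_assoc a)
  have P2: "mat 1 - H = cadj Vhi ** transpose J ** Vhi" unfolding JTH hVhi by (simp add: matrix_mul_assoc a)
  have psd1: "psd (mat 1 + H)" using psd_congr[OF J] P1 by simp
  have psd2: "psd (mat 1 - H)" using psd_congr[OF psd_transpose[OF J]] P2 by simp
  have HH: "H ** H = - (K ** K)"
  proof -
    have "H ** H = (mat \<i> ** mat \<i>) ** (K ** K)" by (simp only: H_def mat_pass) (simp add: matrix_mul_assoc)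
    also have "\<dots> = - (K ** K)" by (simp add: mat_mat mat_neg1)
    finally show ?thesis .
  qed
  have e12: "(mat 1 + H) ** (mat 1 - H) = mat 1 - H ** H"
    by (simp add: mm_add_r mm_diff_l algebra_simps)
  have e21: "(mat 1 - H) ** (mat 1 + H) = mat 1 - H ** H"
    by (simp add: mm_add_l mm_diff_r algebra_simps)
  have KK: "mat 1 + K ** K = (mat 1 + H) ** (mat 1 - H)" by (simp add: e12 HH)
  define M where "M = msqrt (mat 1 + K ** K)"
  have pP: "psd (mat 1 + K ** K)" using psd_mult_comm[OF psd1 psd2] e12 e21 KK by simp
  have M: "psd M" "M ** M = mat 1 + K ** K" using msqrt[OF pP] by (auto simp: M_def)
  have c1: "H ** (mat 1 + H) = (mat 1 + H) ** H" by (simp add: mm_add_l mm_add_r)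
  have c2: "H ** (mat 1 - H) = (mat 1 - H) ** H" by (simp add: mm_diff_l mm_diff_r)
  have "H ** (M ** M) = (H ** (mat 1 + H)) ** (mat 1 - H)" by (simp add: M(2) KK matrix_mul_assoc)
  also have "\<dots> = (mat 1 + H) ** (H ** (mat 1 - H))" by (simp add: c1 matrix_mul_assoc)
  also have "\<dots> = (M ** M) ** H" by (simp add: c2 M(2) KK matrix_mul_assoc)
  finally have "H ** (M ** M) = (M ** M) ** H" .
  then have HM: "H ** M = M ** H" using comm_sqrt[OF M(1)] by blast
  have M1: "M ** (mat 1 + H) = (mat 1 + H) ** M" by (simp add: mm_add_l mm_add_r HM)
  have P1inv: "invertible (mat 1 + H)"
  proof -
    have Vhiinv: "invertible Vhi" unfolding invertible_def using a(1,2) by blast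
    show ?thesis unfolding P1 hVhi
      using invertible_mult[OF invertible_mult[OF Vhiinv pd_invertible[OF Jpd]] Vhiinv] .
  qed
  define P1i where "P1i = matrix_inv (mat 1 + H)"
  have b: "(mat 1 + H) ** P1i = mat 1" "P1i ** (mat 1 + H) = mat 1"
     "X ** (mat 1 + H) ** P1i = X" "X ** P1i ** (mat 1 + H) = X" for X :: "complex^'n^'n"
    using inv_simps[OF P1inv] by (auto simp: P1i_def)
  have Jinv: "matrix_inv J = Vhi ** P1i ** Vhi"
    by (rule minv_unique) (simp add: JH matrix_mul_assoc a b)
  have MP: "M ** P1i = P1i ** M"
  proof -
    have "P1i ** (M ** (mat 1 + H)) ** P1i = P1i ** ((mat 1 + H) ** M) ** P1i" by (simp add: M1)
    then show ?thesis by (simp add: matrix_mul_assoc b)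
  qed
  define Y where "Y = Vh ** M ** Vh"
  have Ypsd: "psd Y" using psd_congr[OF M(1), of Vh] hVh by (simp add: Y_def)
  have "Y ** matrix_inv J ** Y = Vh ** (M ** P1i ** M) ** Vh"
    by (simp add: Y_def Jinv matrix_mul_assoc a)
  also have "M ** P1i ** M = P1i ** (M ** M)" by (simp add: MP matrix_mul_assoc)
  also have "\<dots> = mat 1 - H" by (simp add: M(2) KK matrix_mul_assoc b)
  finally have YQ: "Y ** matrix_inv J ** Y = transpose J" by (simp add: JTH)
  have "gmean_pd J (transpose J) = Y" by (rule riccati[OF Jpd Ypsd YQ])
  also have "Y = Fm J"
    by (simp add: Fm_def Let_def Y_def M_def K_def Vhi_def Vh_def V_def S_def)
  finally show ?thesis .
qed


lemma tendsto_mm: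
  fixes f g :: "'a \<Rightarrow> complex^'n^'n"
  assumes "(f \<longlongrightarrow> A) F" "(g \<longlongrightarrow> B) F"
  shows "((\<lambda>x. f x ** g x) \<longlongrightarrow> A ** B) F"
  unfolding matrix_matrix_mult_def
  by (intro tendsto_vec_lambda tendsto_sum tendsto_mult tendsto_vec_nth assms)

lemma continuous_on_mm:
  fixes f g :: "'a::topological_space \<Rightarrow> complex^'n^'n"
  assumes "continuous_on S f" "continuous_on S g"
  shows "continuous_on S (\<lambda>x. f x ** g x)"
  using assms unfolding continuous_on_def by (auto intro: tendsto_mm)

lemma tendsto_det:
  fixes f :: "'a \<Rightarrow> complex^'n^'n"
  assumes "(f \<longlongrightarrow> A) F"
  shows "((\<lambda>x. det (f x)) \<longlongrightarrow> det A) F"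
  unfolding det_def
  by (intro tendsto_sum tendsto_mult tendsto_const tendsto_prod tendsto_vec_nth assms)

definition cinv :: "complex^'n^'n \<Rightarrow> complex^'n^'n" where
  "cinv A = (\<chi> k j. det (\<chi> a b. if b = k then axis j 1 $ a else A$a$b) / det A)"

lemma matrix_inv_cinv:
  fixes A :: "complex^'n^'n"
  assumes "invertible A"
  shows "matrix_inv A = cinv A"
proof -
  have d: "det A \<noteq> 0" using assms invertible_det_nz by blast
  have "matrix_inv A $ k $ j = cinv A $ k $ j" for k j
  proof -
    have "A *v (matrix_inv A *v axis j 1) = axis j 1"
      by (simp add: matrix_vector_mul_assoc minv(1)[OF assms])
    then have "matrix_inv A *v axis j 1 = (\<chi> k. det(\<chi> i l. if l=k then axis j 1$i else A$i$l) / det A)"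
      using cramer[OF d] by blast
    then show ?thesis by (simp add: mat_entry_axis[of "matrix_inv A"] cinv_def)
  qed
  then show ?thesis by (simp add: vec_eq_iff)
qed

lemma tendsto_cinv:
  fixes f :: "'a \<Rightarrow> complex^'n^'n"
  assumes f: "(f \<longlongrightarrow> A) F" and d: "det A \<noteq> 0"
  shows "((\<lambda>x. cinv (f x)) \<longlongrightarrow> cinv A) F"
proof -
  have r: "((\<lambda>x. (\<chi> a b. if b = k then axis j 1 $ a else f x $a$b)) \<longlongrightarrow>
           (\<chi> a b. if b = k then axis j 1 $ a else A$a$b)) F" for k j :: 'n
  proof (intro tendsto_vec_lambda)
    fix a b :: 'n
    show "((\<lambda>x. if b = k then axis j 1 $ a else f x $a$b) \<longlongrightarrow> (if b = k then axis j 1 $ a else A$a$b)) F"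
      by (cases "b = k") (simp_all add: tendsto_vec_nth f)
  qed
  show ?thesis unfolding cinv_def
    by (intro tendsto_vec_lambda tendsto_divide tendsto_det r f d)
qed

lemma tendsto_minv:
  fixes f :: "'a \<Rightarrow> complex^'n^'n"
  assumes f: "(f \<longlongrightarrow> A) F" and A: "invertible A" and ev: "eventually (\<lambda>x. invertible (f x)) F"
  shows "((\<lambda>x. matrix_inv (f x)) \<longlongrightarrow> matrix_inv A) F"
proof -
  have "((\<lambda>x. cinv (f x)) \<longlongrightarrow> cinv A) F"
    using tendsto_cinv[OF f] A invertible_det_nz by blast
  then show ?thesis unfolding matrix_inv_cinv[OF A]
    by (rule Lim_transform_eventually) (use ev in \<open>auto elim!: eventually_mono simp: matrix_inv_cinv\<close>)
qed

lemma continuous_on_cadj: "continuous_on S (\<lambda>A::complex^'n^'n. cadj A)"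
proof -
  have "(\<lambda>A::complex^'n^'n. cadj A) = (\<lambda>A. \<chi> i j. cnj (A $ j $ i))" by (simp add: cadj_def)
  moreover have "continuous_on S (\<lambda>A::complex^'n^'n. \<chi> i j. cnj (A $ j $ i))"
    by (intro continuous_on_vec_lambda continuous_on_cnj continuous_on_component continuous_on_id)
  ultimately show ?thesis by simp
qed

lemma closed_psd: "closed {A :: complex^'n^'n. psd A}"
proof -
  have "{A :: complex^'n^'n. psd A} = {A. cadj A = A} \<inter> (\<Inter>x. {A. 0 \<le> Re (cquad A x)})"
    by (auto simp: psd_def)
  also have "closed \<dots>"
  proof (intro closed_Int closed_INT ballI)
    show "closed {A :: complex^'n^'n. cadj A = A}"
      by (intro closed_Collect_eq continuous_on_cadj continuous_on_id)
    fix x :: "complex^'n"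
    have e: "(\<lambda>A::complex^'n^'n. Re (cquad A x)) = (\<lambda>A. Re (\<Sum>i\<in>UNIV. cnj (x$i) * (\<Sum>j\<in>UNIV. A$i$j * x$j)))"
      by (simp add: cquad_def matrix_vector_mult_def)
    have "continuous_on UNIV (\<lambda>A::complex^'n^'n. Re (\<Sum>i\<in>UNIV. cnj (x$i) * (\<Sum>j\<in>UNIV. A$i$j * x$j)))"
      by (intro continuous_intros)
    then have "continuous_on UNIV (\<lambda>A::complex^'n^'n. Re (cquad A x))" by (simp only: e)
    then show "closed {A :: complex^'n^'n. 0 \<le> Re (cquad A x)}"
      by (intro closed_Collect_le continuous_on_const)
  qed
  finally show ?thesis .
qed

lemma row_norm_sq:
  assumes "cadj B = B"
  shows "(norm (B $ i))^2 = Re ((B ** B) $ i $ i)"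
proof -
  have "(B ** B) $ i $ i = (\<Sum>k\<in>UNIV. B$i$k * cnj (B$i$k))"
    unfolding matrix_matrix_mult_def vec_lambda_beta
    by (intro sum.cong refl) (use herm_entry[OF assms] in metis)
  also have "\<dots> = cinner (B $ i) (B $ i)" by (simp add: cinner_def mult.commute)
  finally show ?thesis by (simp add: norm_sq_cinner)
qed

lemma msqrt_bound:
  fixes A :: "complex^'n^'n"
  assumes "psd A"
  shows "norm (msqrt A) \<le> sqrt (real CARD('n) * norm A)"
proof -
  let ?B = "msqrt A"
  have B: "psd ?B" "?B ** ?B = A" using msqrt[OF assms] by auto
  have "(norm ?B)^2 = (\<Sum>i\<in>UNIV. (norm (?B $ i))^2)"
    by (simp add: norm_vec_def L2_set_def sum_nonneg)
  also have "\<dots> = (\<Sum>i\<in>UNIV. Re (A $ i $ i))"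
    using row_norm_sq[OF psd_herm[OF B(1)]] B(2) by simp
  also have "\<dots> \<le> (\<Sum>i\<in>(UNIV::'n set). norm A)"
  proof (rule sum_mono)
    fix i
    have "Re (A$i$i) \<le> norm (A$i$i)" by (rule complex_Re_le_cmod)
    also have "\<dots> \<le> norm (A$i)" by (rule Finite_Cartesian_Product.norm_nth_le)
    also have "\<dots> \<le> norm A" by (rule Finite_Cartesian_Product.norm_nth_le)
    finally show "Re (A$i$i) \<le> norm A" .
  qed
  also have "\<dots> = real CARD('n) * norm A" by simp
  finally show ?thesis by (metis norm_ge_zero real_le_rsqrt)
qed

lemma msqrt_continuous_on:
  "continuous_on {A :: complex^'n^'n. psd A \<and> norm A \<le> r} msqrt"
proof (rule continuous_from_closed_graph[where T = "cball 0 (sqrt (real CARD('n) * r))"])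
  show "compact (cball (0::complex^'n^'n) (sqrt (real CARD('n) * r)))" by simp
  show "msqrt \<in> {A :: complex^'n^'n. psd A \<and> norm A \<le> r} \<rightarrow> cball 0 (sqrt (real CARD('n) * r))"
  proof
    fix A :: "complex^'n^'n" assume A: "A \<in> {A. psd A \<and> norm A \<le> r}"
    have "norm (msqrt A) \<le> sqrt (real CARD('n) * norm A)" using A msqrt_bound by blast
    also have "\<dots> \<le> sqrt (real CARD('n) * r)" using A by (intro real_sqrt_le_mono mult_left_mono) auto
    finally show "msqrt A \<in> cball 0 (sqrt (real CARD('n) * r))" by simp
  qed
  have eq: "(\<lambda>x. (x, msqrt x)) ` {A :: complex^'n^'n. psd A \<and> norm A \<le> r} =
      {p. psd (fst p) \<and> norm (fst p) \<le> r \<and> psd (snd p) \<and> snd p ** snd p = fst p}"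
  proof (intro set_eqI iffI)
    fix p assume "p \<in> (\<lambda>x. (x, msqrt x)) ` {A :: complex^'n^'n. psd A \<and> norm A \<le> r}"
    then obtain x where x: "p = (x, msqrt x)" "psd x" "norm x \<le> r" by blast
    then show "p \<in> {p. psd (fst p) \<and> norm (fst p) \<le> r \<and> psd (snd p) \<and> snd p ** snd p = fst p}"
      using msqrt[OF x(2)] by simp
  next
    fix p :: "(complex^'n^'n) \<times> (complex^'n^'n)"
    assume "p \<in> {p. psd (fst p) \<and> norm (fst p) \<le> r \<and> psd (snd p) \<and> snd p ** snd p = fst p}"
    then have "snd p = msqrt (fst p)" "psd (fst p)" "norm (fst p) \<le> r" using msqrt_eq[of "snd p" "fst p"] by auto
    moreover have "p = (fst p, snd p)" by simp
    ultimately show "p \<in> (\<lambda>x. (x, msqrt x)) ` {A :: complex^'n^'n. psd A \<and> norm A \<le> r}"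
      by (intro image_eqI[where x = "fst p"]) auto
  qed
  have c1: "closed {p :: (complex^'n^'n) \<times> (complex^'n^'n). psd (fst p)}"
    using closed_vimage[OF closed_psd continuous_on_fst[OF continuous_on_id]] by (simp add: vimage_def)
  have c2: "closed {p :: (complex^'n^'n) \<times> (complex^'n^'n). psd (snd p)}"
    using closed_vimage[OF closed_psd continuous_on_snd[OF continuous_on_id]] by (simp add: vimage_def)
  have c3: "closed {p :: (complex^'n^'n) \<times> (complex^'n^'n). norm (fst p) \<le> r}"
    by (intro closed_Collect_le continuous_on_norm[OF continuous_on_fst[OF continuous_on_id]] continuous_on_const)
  have c4: "closed {p :: (complex^'n^'n) \<times> (complex^'n^'n). snd p ** snd p = fst p}"
    by (intro closed_Collect_eq continuous_on_mm[OF continuous_on_snd[OF continuous_on_id] continuous_on_snd[OF continuous_on_id]]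
        continuous_on_fst[OF continuous_on_id])
  show "closed ((\<lambda>x. (x, msqrt x)) ` {A :: complex^'n^'n. psd A \<and> norm A \<le> r})"
  proof -
    have "{p :: (complex^'n^'n) \<times> (complex^'n^'n). psd (fst p) \<and> norm (fst p) \<le> r \<and> psd (snd p) \<and> snd p ** snd p = fst p}
      = {p. psd (fst p)} \<inter> ({p. norm (fst p) \<le> r} \<inter> ({p. psd (snd p)} \<inter> {p. snd p ** snd p = fst p}))"
      by blast
    then show ?thesis unfolding eq using closed_Int[OF c1 closed_Int[OF c3 closed_Int[OF c2 c4]]]
      by simp
  qed
qed

lemma tendsto_msqrt:
  fixes f :: "'a \<Rightarrow> complex^'n^'n"
  assumes f: "(f \<longlongrightarrow> A) F" and A: "psd A" and ev: "eventually (\<lambda>x. psd (f x)) F"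
  shows "((\<lambda>x. msqrt (f x)) \<longlongrightarrow> msqrt A) F"
proof -
  have d: "eventually (\<lambda>x. dist (f x) A < 1) F"
    using tendsto_iff[THEN iffD1, OF f, rule_format, of 1] by simp
  have "eventually (\<lambda>x. psd (f x) \<and> dist (f x) A < 1) F" using ev d by (rule eventually_conj)
  then have "eventually (\<lambda>x. f x \<in> {B. psd B \<and> norm B \<le> norm A + 1}) F"
  proof (rule eventually_mono)
    fix x assume h: "psd (f x) \<and> dist (f x) A < 1"
    have "norm (f x) \<le> norm A + norm (f x - A)" by (rule norm_triangle_sub)
    then show "f x \<in> {B. psd B \<and> norm B \<le> norm A + 1}" using h by (simp add: dist_norm)
  qed
  moreover have "A \<in> {B. psd B \<and> norm B \<le> norm A + 1}" using A by simp
  ultimately show ?thesis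
    using continuous_on_tendsto_compose[OF msqrt_continuous_on f] by blast
qed


lemma psd_KK:
  fixes J :: "complex^'n^'n"
  assumes J: "psd J" and Vpd: "pd (mRe J)"
  shows "psd (mat 1 + (matrix_inv (msqrt (mRe J)) ** mIm J ** matrix_inv (msqrt (mRe J))) **
                      (matrix_inv (msqrt (mRe J)) ** mIm J ** matrix_inv (msqrt (mRe J))))"
proof -
  define V where "V = mRe J"
  define S where "S = mIm J"
  define Vh where "Vh = msqrt V"
  have Vh: "psd Vh" "Vh ** Vh = V" using msqrt[OF pd_psd[OF Vpd]] by (auto simp: Vh_def V_def)
  have Vhinv: "invertible Vh" using sqrt_invertible[OF Vpd] Vh by (simp add: V_def)
  have hVh: "cadj Vh = Vh" using Vh by (simp add: psd_def)
  define Vhi where "Vhi = matrix_inv Vh"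
  have a: "Vh ** Vhi = mat 1" "Vhi ** Vh = mat 1" "X ** Vh ** Vhi = X" "X ** Vhi ** Vh = X" for X :: "complex^'n^'n"
    using inv_simps[OF Vhinv] by (auto simp: Vhi_def)
  have hVhi: "cadj Vhi = Vhi" using herm_inv[OF hVh Vhinv] by (simp add: Vhi_def)
  define K where "K = Vhi ** S ** Vhi"
  define H where "H = mat \<i> ** K"
  have VKV: "Vh ** K ** Vh = S" by (simp add: K_def matrix_mul_assoc a)
  have VhH: "Vh ** H ** Vh = mat \<i> ** S"
    by (simp add: H_def mat_pass) (metis VKV matrix_mul_assoc)
  have JH: "J = Vh ** (mat 1 + H) ** Vh"
  proof -
    have "Vh ** (mat 1 + H) ** Vh = V + Vh ** H ** Vh"
      by (simp add: mm_add_l mm_add_r Vh)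
    also have "\<dots> = mRe J + mat \<i> ** mIm J" by (simp add: VhH V_def S_def)
    also have "\<dots> = J" by (rule J_decomp[symmetric])
    finally show ?thesis by simp
  qed
  have JTH: "transpose J = Vh ** (mat 1 - H) ** Vh"
  proof -
    have "Vh ** (mat 1 - H) ** Vh = V - Vh ** H ** Vh"
      by (simp add: mm_diff_l mm_diff_r Vh)
    also have "\<dots> = transpose J" using JT_decomp[OF psd_herm[OF J]] by (simp add: VhH V_def S_def)
    finally show ?thesis by simp
  qed
  have P1: "mat 1 + H = cadj Vhi ** J ** Vhi" unfolding JH hVhi by (simp add: matrix_mul_assoc a)
  have P2: "mat 1 - H = cadj Vhi ** transpose J ** Vhi" unfolding JTH hVhi by (simp add: matrix_mul_assoc a)
  have psd1: "psd (mat 1 + H)" using psd_congr[OF J] P1 by simp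
  have psd2: "psd (mat 1 - H)" using psd_congr[OF psd_transpose[OF J]] P2 by simp
  have HH: "H ** H = - (K ** K)"
  proof -
    have "H ** H = (mat \<i> ** mat \<i>) ** (K ** K)" by (simp only: H_def mat_pass) (simp add: matrix_mul_assoc)
    also have "\<dots> = - (K ** K)" by (simp add: mat_mat mat_neg1)
    finally show ?thesis .
  qed
  have e12: "(mat 1 + H) ** (mat 1 - H) = mat 1 - H ** H"
    by (simp add: mm_add_r mm_diff_l algebra_simps)
  have e21: "(mat 1 - H) ** (mat 1 + H) = mat 1 - H ** H"
    by (simp add: mm_add_l mm_diff_r algebra_simps)
  have KK: "mat 1 + K ** K = (mat 1 + H) ** (mat 1 - H)" by (simp add: e12 HH)
  have "psd (mat 1 + K ** K)" using psd_mult_comm[OF psd1 psd2] e12 e21 KK by simp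
  then show ?thesis by (simp add: K_def Vhi_def Vh_def V_def S_def)
qed

lemma mRe_shift: "mRe (J + mat (complex_of_real e)) = mRe J + mat (complex_of_real e)"
  by (simp add: vec_eq_iff mRe_def mat_def)

lemma mIm_shift: "mIm (J + mat (complex_of_real e)) = mIm J"
  by (simp add: vec_eq_iff mIm_def mat_def)

lemma transpose_shift: "transpose (J + mat c) = transpose J + mat (c::complex)"
  by (simp add: vec_eq_iff transpose_def mat_def)

lemma cquad_shift: "cquad (A + mat c) x = cquad A x + c * cinner x x"
proof -
  have m: "(mat c *v x) $ i = (c *s x) $ i" for i
  proof -
    have "(mat c *v x) $ i = (\<Sum>j\<in>UNIV. if j = i then c * x$j else 0)"
      unfolding matrix_vector_mult_def vec_lambda_beta by (intro sum.cong) (auto simp: mat_def)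
    then show ?thesis by simp
  qed
  have "(A + mat c) *v x = A *v x + c *s x"
    using m by (simp add: matrix_vector_mult_add_rdistrib vec_eq_iff)
  then show ?thesis by (simp add: cquad_cinner cinner_add_right cinner_smult_right)
qed

lemma psd_shift_pd:
  fixes A :: "complex^'n^'n"
  assumes "psd A" "e > 0"
  shows "pd (A + mat (complex_of_real e))"
  unfolding pd_def
proof (intro conjI allI impI)
  show "cadj (A + mat (complex_of_real e)) = A + mat (complex_of_real e)"
    using assms by (simp add: cadj_add psd_def)
  fix x :: "complex^'n" assume "x \<noteq> 0"
  then have "0 < Re (cinner x x)" by (rule cinner_self_pos)
  moreover have "0 \<le> Re (cquad A x)" using assms by (simp add: psd_def)
  moreover have "Re (complex_of_real e * cinner x x) = e * Re (cinner x x)" by simp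
  moreover have "0 < e * Re (cinner x x)" using assms(2) calculation(1) by simp
  ultimately show "0 < Re (cquad (A + mat (complex_of_real e)) x)"
    by (simp add: cquad_shift)
qed

lemma Fm_alt: "Fm J = (let Vh = msqrt (mRe J); Vhi = matrix_inv Vh; K = Vhi ** mIm J ** Vhi
   in Vh ** msqrt (mat 1 + K ** K) ** Vh)"
  by (simp add: Fm_def Let_def)

lemma mat_real: "mat (complex_of_real e) = e *\<^sub>R (mat 1 :: complex^'n^'n)"
  by (simp add: vec_eq_iff mat_def scaleR_conv_of_real[where 'a=complex])

lemma Fm_limit:
  fixes J :: "complex^'n^'n"
  assumes J: "psd J" and Vpd: "pd (mRe J)"
  shows "((\<lambda>e. Fm (J + mat (complex_of_real e))) \<longlongrightarrow> Fm J) (at_right 0)"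
proof -
  let ?F = "at_right (0::real)"
  define Ve where "Ve e = mRe J + mat (complex_of_real e)" for e
  have pos: "eventually (\<lambda>e. e > 0) ?F" by (rule eventually_at_right_less)
  have pdVe: "eventually (\<lambda>e. pd (Ve e)) ?F"
    using pos by eventually_elim (simp add: Ve_def psd_shift_pd pd_psd[OF Vpd])
  have psdJe: "eventually (\<lambda>e. psd (J + mat (complex_of_real e))) ?F"
    using pos by eventually_elim (simp add: psd_shift_pd pd_psd J)
  have tV: "(Ve \<longlongrightarrow> mRe J) ?F"
  proof -
    have "((\<lambda>e. mRe J + e *\<^sub>R (mat 1 :: complex^'n^'n)) \<longlongrightarrow> mRe J + 0 *\<^sub>R mat 1) ?F"
      by (intro tendsto_intros)
    moreover have "Ve = (\<lambda>e. mRe J + e *\<^sub>R (mat 1 :: complex^'n^'n))"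
      by (rule ext) (simp only: Ve_def mat_real)
    ultimately show ?thesis by simp
  qed
  have psdV: "psd (mRe J)" using pd_psd[OF Vpd] .
  have tVh: "((\<lambda>e. msqrt (Ve e)) \<longlongrightarrow> msqrt (mRe J)) ?F"
    by (rule tendsto_msqrt[OF tV psdV]) (use pdVe in \<open>auto elim: eventually_mono intro: pd_psd\<close>)
  have invVh: "invertible (msqrt (mRe J))" using sqrt_invertible[OF Vpd] msqrt[OF psdV] by blast
  have evinv: "eventually (\<lambda>e. invertible (msqrt (Ve e))) ?F"
    using pdVe by eventually_elim (use sqrt_invertible msqrt pd_psd in blast)
  have tVhi: "((\<lambda>e. matrix_inv (msqrt (Ve e))) \<longlongrightarrow> matrix_inv (msqrt (mRe J))) ?F"
    by (rule tendsto_minv[OF tVh invVh evinv])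
  define K where "K = matrix_inv (msqrt (mRe J)) ** mIm J ** matrix_inv (msqrt (mRe J))"
  define Ke where "Ke e = matrix_inv (msqrt (Ve e)) ** mIm J ** matrix_inv (msqrt (Ve e))" for e
  have tK: "(Ke \<longlongrightarrow> K) ?F"
    unfolding Ke_def K_def by (intro tendsto_mm tVhi tendsto_const)
  have tKK: "((\<lambda>e. mat 1 + Ke e ** Ke e) \<longlongrightarrow> mat 1 + K ** K) ?F"
    by (intro tendsto_add tendsto_const tendsto_mm tK)
  have psdKK: "psd (mat 1 + K ** K)" using psd_KK[OF J Vpd] by (simp add: K_def)
  have evKK: "eventually (\<lambda>e. psd (mat 1 + Ke e ** Ke e)) ?F"
    using pdVe psdJe
  proof eventually_elim
    case (elim e)
    then show ?case using psd_KK[of "J + mat (complex_of_real e)"]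
      by (simp add: Ke_def Ve_def mRe_shift mIm_shift)
  qed
  have tM: "((\<lambda>e. msqrt (mat 1 + Ke e ** Ke e)) \<longlongrightarrow> msqrt (mat 1 + K ** K)) ?F"
    by (rule tendsto_msqrt[OF tKK psdKK evKK])
  have "((\<lambda>e. msqrt (Ve e) ** msqrt (mat 1 + Ke e ** Ke e) ** msqrt (Ve e)) \<longlongrightarrow>
         msqrt (mRe J) ** msqrt (mat 1 + K ** K) ** msqrt (mRe J)) ?F"
    by (intro tendsto_mm tVh tM)
  moreover have "Fm (J + mat (complex_of_real e)) = msqrt (Ve e) ** msqrt (mat 1 + Ke e ** Ke e) ** msqrt (Ve e)" for e
    by (simp add: Fm_alt Let_def mRe_shift mIm_shift Ve_def Ke_def)
  moreover have "Fm J = msqrt (mRe J) ** msqrt (mat 1 + K ** K) ** msqrt (mRe J)"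
    by (simp add: Fm_alt Let_def K_def)
  ultimately show ?thesis by simp
qed

theorem lemma12:
  fixes J :: "complex^'n^'n"
  assumes "psd J"
    and "pd (mRe J)"
  shows "gmean J (transpose J) =
    (let V = mRe J; S = mIm J; Vh = msqrt V; Vhi = matrix_inv Vh;
         K = Vhi ** S ** Vhi
     in Vh ** msqrt (mat 1 + K ** K) ** Vh)"
proof -
  have "gmean J (transpose J) = Fm J"
  proof (cases "pd J")
    case True
    then have "pd J \<and> pd (transpose J)" using pd_transpose by blast
    then show ?thesis using pd_case[OF assms(1) True assms(2)] by (simp add: gmean_def)
  next
    case False
    then have g: "gmean J (transpose J) = Lim (at_right (0::real))
        (\<lambda>e. gmean_pd (J + mat (complex_of_real e)) (transpose J + mat (complex_of_real e)))"
      by (simp add: gmean_def)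
    have ev: "eventually (\<lambda>e. Fm (J + mat (complex_of_real e)) =
        gmean_pd (J + mat (complex_of_real e)) (transpose J + mat (complex_of_real e))) (at_right (0::real))"
      using eventually_at_right_less
    proof eventually_elim
      case (elim e)
      have a: "pd (J + mat (complex_of_real e))" using psd_shift_pd[OF assms(1) elim] .
      have b: "pd (mRe (J + mat (complex_of_real e)))"
        using psd_shift_pd[OF pd_psd[OF assms(2)] elim] by (simp add: mRe_shift)
      show ?case
        using pd_case[OF pd_psd[OF a] a b] by (simp add: transpose_shift)
    qed
    have "((\<lambda>e. gmean_pd (J + mat (complex_of_real e)) (transpose J + mat (complex_of_real e))) \<longlongrightarrow> Fm J)
        (at_right (0::real))"
      using Fm_limit[OF assms] ev by (rule Lim_transform_eventually)
    then show ?thesis unfolding g by (intro tendsto_Lim) simp_all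
  qed
  then show ?thesis by (simp add: Fm_def)
qed


end
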